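(* Let $\lambda\in\mathbb{C}$, $\mu\ge0$, and let $f\in\mathcal{R}$ with $f(z)=z+\sum_{n=2}^\infty a_nz^n$. Define $F_{\lambda,\mu}(f)=|a_3-\lambda a_2^2|-\mu|a_2|$. Then \[ F_{\lambda,\mu}(f)\le\begin{cases}\dfrac13\big(|2-3\lambda|-3\mu\big), & |2-3\lambda|\ge2+3\mu,\\[2mm] \dfrac23, & |2-3\lambda|<2+3\mu,\end{cases} \] and \[ F_{\lambda,\mu}(f)\ge\begin{cases}-\dfrac13\big(3\mu-|2-3\lambda|\big), & |2-3\lambda|\le\dfrac{3\mu-4}{2},\\[2mm] -\mu\sqrt{\dfrac{2}{|2-3\lambda|+2}}, & |2-3\lambda|\ge\dfrac{9\mu^2-16}{8},\\[2mm] -\dfrac1{12}\left(8+\dfrac{9\mu^2}{|2-3\lambda|+2}\right), & \dfrac{3\mu-4}{2}<|2-3\lambda|<\dfrac{9\mu^2-16}{8}.\end{cases} \] All inequalities are sharp (each bound is attained by some $f\in\mathcal{R}$).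
   Context: $\mathbb{D}$ is the open unit disk; $\mathcal{A}$ is the class of holomorphic $f$ on $\mathbb{D}$ with $f(0)=0$, $f'(0)=1$; $\mathcal{R}=\{f\in\mathcal{A}:\operatorname{Re} f'(z)>0\ \forall z\in\mathbb{D}\}$ (functions of bounded turning). *)

theory Defs
  imports "HOL-Complex_Analysis.Complex_Analysis"
begin

definition bounded_turning :: "(complex \<Rightarrow> complex) set" where
  "bounded_turning = {f. f holomorphic_on ball 0 1 \<and> f 0 = 0 \<and> deriv f 0 = 1 \<and>
      (\<forall>z\<in>ball 0 1. Re (deriv f z) > 0)}"

definition tcoeff :: "(complex \<Rightarrow> complex) \<Rightarrow> nat \<Rightarrow> complex" where
  "tcoeff f n = (deriv ^^ n) f 0 / of_nat (fact n)"

definition Ffun :: "complex \<Rightarrow> real \<Rightarrow> (complex \<Rightarrow> complex) \<Rightarrow> real" where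
  "Ffun lam mu f = cmod (tcoeff f 3 - lam * (tcoeff f 2)^2) - mu * cmod (tcoeff f 2)"

end

theory Submission
  imports Defs
begin

lemma deriv_ball_eq:
  assumes "\<forall>z\<in>ball 0 1. F z = G z" "x \<in> ball (0::complex) 1"
  shows "deriv F x = deriv G x"
proof (rule deriv_cong_ev[OF _ refl])
  show "\<forall>\<^sub>F z in nhds x. F z = G z"
    using eventually_nhds_in_open[OF open_ball assms(2)] assms(1)
    by (auto elim: eventually_mono)
qed

lemma zmul_derivs:
  assumes g: "g holomorphic_on ball 0 1" and eq: "\<forall>z\<in>ball 0 1. w z = z * g z"
  shows "deriv w 0 = g 0" "deriv (deriv w) 0 = 2 * deriv g 0"
proof -
  have dg: "deriv g holomorphic_on ball 0 1" by (rule holomorphic_deriv[OF g open_ball])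
  have d1: "\<forall>z\<in>ball 0 1. deriv w z = g z + z * deriv g z"
  proof
    fix z :: complex assume z: "z \<in> ball 0 1"
    have "deriv w z = deriv (\<lambda>z. z * g z) z" by (rule deriv_ball_eq[OF eq z])
    also have "\<dots> = g z + z * deriv g z"
      by (rule DERIV_imp_deriv) (auto intro!: derivative_eq_intros holomorphic_derivI[OF g open_ball z])
    finally show "deriv w z = g z + z * deriv g z" .
  qed
  then show "deriv w 0 = g 0" by simp
  have "deriv (deriv w) 0 = deriv (\<lambda>z. g z + z * deriv g z) 0" by (rule deriv_ball_eq[OF d1]) simp
  also have "\<dots> = 2 * deriv g 0"
    by (rule DERIV_imp_deriv) (auto intro!: derivative_eq_intros holomorphic_derivI[OF g open_ball] holomorphic_derivI[OF dg open_ball])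
  finally show "deriv (deriv w) 0 = 2 * deriv g 0" .
qed

lemma re_pos:
  assumes "cmod u < 1" shows "Re ((1 + u) / (1 - u)) > 0"
proof -
  have u1: "u \<noteq> 1" using assms by auto
  have "Re u ^ 2 + Im u ^ 2 < 1" using assms
  proof -
    have "cmod u ^ 2 < 1" using assms by (simp add: power_less_one_iff)
    then show ?thesis by (simp add: cmod_power2)
  qed
  moreover have "(Re (1-u))^2 + (Im (1-u))^2 > 0" using u1 by (metis cmod_power2 zero_less_norm_iff right_minus_eq zero_less_power)
  moreover have "Re ((1 + u) / (1 - u)) = (1 - (Re u ^ 2 + Im u ^ 2)) / ((Re (1-u))^2 + (Im (1-u))^2)"
  proof -
    have "Re (1+u) * Re (1-u) + Im (1+u) * Im (1-u) = 1 - (Re u ^ 2 + Im u ^ 2)"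
      by (simp add: power2_eq_square algebra_simps)
    then show ?thesis by (simp only: Re_divide)
  qed
  ultimately show ?thesis by simp
qed

lemma coef:
  assumes w: "w holomorphic_on ball 0 1" "w 0 = 0" "\<forall>z\<in>ball 0 1. cmod (w z) < 1"
  and f: "f holomorphic_on ball 0 1" "f 0 = 0" "\<forall>z\<in>ball 0 1. deriv f z = (1 + w z) / (1 - w z)"
  shows "f \<in> bounded_turning" "tcoeff f 2 = deriv w 0"
        "tcoeff f 3 = (deriv (deriv w) 0 + 2 * (deriv w 0)^2) / 3"
proof -
  have nz: "1 - w z \<noteq> 0" if "z \<in> ball 0 1" for z
    using w(3) that by (metis norm_one order.irrefl right_minus_eq)
  have dw: "deriv w holomorphic_on ball 0 1" by (rule holomorphic_deriv[OF w(1) open_ball])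
  show "f \<in> bounded_turning"
  proof -
    have "deriv f 0 = 1" using f(3) w(2) by simp
    moreover have "\<forall>z\<in>ball 0 1. Re (deriv f z) > 0"
      using f(3) w(3) re_pos by simp
    ultimately show ?thesis unfolding bounded_turning_def using f(1,2) by blast
  qed
  have d2: "\<forall>z\<in>ball 0 1. deriv (deriv f) z = 2 * deriv w z / (1 - w z)^2"
  proof
    fix z :: complex assume z: "z \<in> ball 0 1"
    have "deriv (deriv f) z = deriv (\<lambda>z. (1 + w z) / (1 - w z)) z" by (rule deriv_ball_eq[OF f(3) z])
    also have "\<dots> = 2 * deriv w z / (1 - w z)^2"
      apply (intro DERIV_imp_deriv)
      apply (rule derivative_eq_intros holomorphic_derivI[OF w(1) open_ball z] refl)+
      using nz[OF z] apply simp
      apply (simp add: field_simps power2_eq_square)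
      done
    finally show "deriv (deriv f) z = 2 * deriv w z / (1 - w z)^2" .
  qed
  have z0: "0 \<in> ball (0::complex) 1" by simp
  have d2' : "deriv (deriv f) 0 = 2 * deriv w 0" using d2 w(2) by simp
  have "deriv (deriv (deriv f)) 0 = deriv (\<lambda>z. 2 * deriv w z / (1 - w z)^2) 0"
    by (rule deriv_ball_eq[OF d2]) simp
  also have "\<dots> = 2 * deriv (deriv w) 0 + 4 * (deriv w 0)^2"
    apply (intro DERIV_imp_deriv)
    apply (rule derivative_eq_intros holomorphic_derivI[OF w(1) open_ball z0] holomorphic_derivI[OF dw open_ball z0] refl)+
    using w(2) apply (simp_all add: field_simps power2_eq_square)
    done
  finally have d3: "deriv (deriv (deriv f)) 0 = 2 * deriv (deriv w) 0 + 4 * (deriv w 0)^2" .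
  have "(deriv ^^ 2) f = deriv (deriv f)" by (simp add: numeral_2_eq_2)
  then show "tcoeff f 2 = deriv w 0" unfolding tcoeff_def using d2' by (simp add: fact_numeral)
  have "(deriv ^^ 3) f = deriv (deriv (deriv f))" by (simp add: numeral_3_eq_3)
  then show "tcoeff f 3 = (deriv (deriv w) 0 + 2 * (deriv w 0)^2) / 3"
    unfolding tcoeff_def using d3 by (simp add: fact_numeral)
qed

lemma spick:
  assumes g: "g holomorphic_on ball 0 1" and lt: "\<forall>z\<in>ball 0 1. cmod (g z) < 1"
  shows "cmod (deriv g 0) \<le> 1 - (cmod (g 0))^2"
proof -
  define a where "a = g 0"
  have z0: "0 \<in> ball (0::complex) 1" by simp
  have a1: "cmod a < 1" using lt a_def by simp
  have na: "1 - cnj a * g z \<noteq> 0" if "z \<in> ball 0 1" for z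
  proof -
    have "cmod a * cmod (g z) \<le> 1 * cmod (g z)" by (rule mult_right_mono) (use a1 in auto)
    moreover have "cmod (g z) < 1" using lt that by simp
    ultimately have "cmod (cnj a * g z) < 1" by (simp add: norm_mult)
    then show ?thesis by (metis norm_one order.irrefl right_minus_eq)
  qed
  define h where "h = (\<lambda>z. (g z - a) / (1 - cnj a * g z))"
  have hh: "h holomorphic_on ball 0 1" unfolding h_def
    by (intro holomorphic_intros g) (use na in auto)
  have h0: "h 0 = 0" by (simp add: h_def a_def)
  have hlt: "cmod (h z) < 1" if "cmod z < 1" for z
  proof -
    have "h z = Moebius_function 0 a (g z)" by (simp add: h_def Moebius_function_simple)
    also have "cmod \<dots> < 1" using Moebius_function_norm_lt_1[OF a1] lt that by simp
    finally show ?thesis .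
  qed
  have dh: "cmod (deriv h 0) \<le> 1"
    using Schwarz_Lemma(2)[OF hh h0 hlt, of 0] by simp
  have aa: "cnj a * a = of_real ((cmod a)^2)"
    by (simp only: complex_norm_square mult.commute)
  have a2: "1 - (cmod a)^2 > 0" using a1 by (simp add: power_less_one_iff)
  have "(h has_field_derivative deriv g 0 / (1 - cnj a * a)) (at 0)"
    unfolding h_def
    apply (rule derivative_eq_intros holomorphic_derivI[OF g open_ball z0] refl)+
    using na[OF z0] apply (simp add: a_def)
    using na[OF z0] apply (simp add: a_def[symmetric])
    done
  then have "deriv h 0 = deriv g 0 / (1 - cnj a * a)" by (rule DERIV_imp_deriv)
  also have "\<dots> = deriv g 0 / of_real (1 - (cmod a)^2)" by (simp add: aa)
  finally have e: "deriv h 0 = deriv g 0 / of_real (1 - (cmod a)^2)" .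
  have n: "cmod (of_real (1 - (cmod a)^2)::complex) = 1 - (cmod a)^2"
    using a2 by (simp only: norm_of_real abs_of_pos)
  have "cmod (deriv h 0) = cmod (deriv g 0) / (1 - (cmod a)^2)"
    by (simp only: e norm_divide n)
  with dh a2 show ?thesis by (simp add: a_def divide_le_eq)
qed

lemma cayley_lt:
  assumes "Re q > 0" shows "cmod ((q - 1) / (q + 1)) < 1"
proof -
  have "(Re q - 1)^2 + (Im q)^2 < (Re q + 1)^2 + (Im q)^2" using assms by (simp add: power2_eq_square algebra_simps)
  then have "cmod (q - 1)^2 < cmod (q + 1)^2" by (simp add: cmod_power2)
  then have "cmod (q - 1) < cmod (q + 1)" by (simp add: power_less_imp_less_base)
  moreover have "q + 1 \<noteq> 0" using assms by (metis add.right_neutral add_pos_pos complex_Re_numeral less_numeral_extra(3) one_complex.sel(1) plus_complex.sel(1) zero_complex.sel(1) zero_less_one)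
  ultimately show ?thesis by (simp add: norm_divide divide_less_eq)
qed

lemma cayley_inv:
  assumes "q + 1 \<noteq> (0::complex)" shows "(1 + (q-1)/(q+1)) / (1 - (q-1)/(q+1)) = q"
proof -
  have e1: "1 + (q-1)/(q+1) = 2*q/(q+1)" using assms by (simp add: field_simps)
  have e2: "1 - (q-1)/(q+1) = 2/(q+1)" using assms by (simp add: field_simps)
  show ?thesis unfolding e1 e2 using assms by simp
qed

lemma necess:
  assumes "f \<in> bounded_turning"
  shows "\<exists>w1 w2. cmod w1 \<le> 1 \<and> cmod w2 \<le> 1 - (cmod w1)^2 \<and> tcoeff f 2 = w1 \<and> tcoeff f 3 = 2/3 * (w2 + w1^2)"
proof -
  have hf: "f holomorphic_on ball 0 1" and f0: "f 0 = 0" and df0: "deriv f 0 = 1"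
    and re: "\<forall>z\<in>ball 0 1. Re (deriv f z) > 0"
    using assms unfolding bounded_turning_def by auto
  define p where "p = deriv f"
  have hp: "p holomorphic_on ball 0 1" unfolding p_def by (rule holomorphic_deriv[OF hf open_ball])
  have pn: "p z + 1 \<noteq> 0" if "z \<in> ball 0 1" for z
  proof
    assume "p z + 1 = 0"
    then have "Re (p z) = -1" by (metis add.right_neutral add_diff_cancel_right' complex_Re_numeral diff_0 minus_complex.sel(1) one_complex.sel(1) zero_complex.sel(1))
    with re that show False unfolding p_def by fastforce
  qed
  define w where "w = (\<lambda>z. (p z - 1) / (p z + 1))"
  have hw: "w holomorphic_on ball 0 1" unfolding w_def
    by (intro holomorphic_intros hp) (use pn in auto)
  have w0: "w 0 = 0" unfolding w_def p_def using df0 by simp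
  have wlt: "\<forall>z\<in>ball 0 1. cmod (w z) < 1"
    unfolding w_def using re cayley_lt unfolding p_def by auto
  have wlt': "cmod (w z) < 1" if "cmod z < 1" for z using wlt that by simp
  have pw: "\<forall>z\<in>ball 0 1. deriv f z = (1 + w z) / (1 - w z)"
  proof
    fix z :: complex assume z: "z \<in> ball 0 1"
    have "p z + 1 \<noteq> 0" by (rule pn[OF z])
    then show "deriv f z = (1 + w z) / (1 - w z)"
      unfolding w_def using cayley_inv by (simp add: p_def)
  qed
  note C = coef[OF hw w0 wlt hf f0 pw]
  obtain g where hg: "g holomorphic_on ball 0 1" and wg: "\<And>z. norm z < 1 \<Longrightarrow> w z = z * g z"
    and dwg: "deriv w 0 = g 0"
    using Schwarz3[OF hw w0] by metis
  have wg': "\<forall>z\<in>ball 0 1. w z = z * g z" using wg by simp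
  note Z = zmul_derivs[OF hg wg']
  have gle: "cmod (g z) \<le> 1" if "z \<in> ball 0 1" for z
  proof (cases "z = 0")
    case True
    then show ?thesis using Schwarz_Lemma(2)[OF hw w0 wlt', of 0] dwg by simp
  next
    case False
    have "cmod (w z) \<le> cmod z" using Schwarz_Lemma(1)[OF hw w0 wlt', of z] that by simp
    then have "cmod z * cmod (g z) \<le> cmod z * 1" using wg[of z] that by (simp add: norm_mult)
    then show ?thesis using False by (simp add: mult_le_cancel_left)
  qed
  have key: "cmod (deriv g 0) \<le> 1 - (cmod (g 0))^2"
  proof (cases "\<forall>z\<in>ball 0 1. cmod (g z) < 1")
    case True
    then show ?thesis by (rule spick[OF hg])
  next
    case False
    then obtain z where z: "z \<in> ball 0 1" "cmod (g z) = 1" using gle by (meson le_less)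
    have "(\<exists>z. norm z < 1 \<and> z \<noteq> 0 \<and> norm (w z) = norm z) \<or> norm (deriv w 0) = 1"
    proof (cases "z = 0")
      case True then show ?thesis using z dwg by auto
    next
      case False then show ?thesis using z wg[of z] by (auto simp: norm_mult)
    qed
    then obtain \<alpha> where al: "\<forall>z. norm z < 1 \<longrightarrow> w z = \<alpha> * z" and na: "norm \<alpha> = 1"
      using Schwarz_Lemma(3)[OF hw w0 wlt', of 0] by auto
    have "deriv w 0 = \<alpha>"
      using zmul_derivs(1)[of "\<lambda>_. \<alpha>" w] al by (auto simp: mult.commute)
    then have gc: "\<forall>z\<in>ball 0 1. g z = \<alpha>"
      using al wg dwg by (auto simp: mult.commute)
    have "deriv g 0 = deriv (\<lambda>_. \<alpha>) 0" by (rule deriv_ball_eq[OF gc]) simp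
    then have "deriv g 0 = 0" by simp
    moreover have "cmod (g 0) = 1" using gc na by simp
    ultimately show ?thesis by simp
  qed
  show ?thesis
  proof (intro exI conjI)
    show "cmod (g 0) \<le> 1" using gle by simp
    show "cmod (deriv g 0) \<le> 1 - (cmod (g 0))^2" by (rule key)
    show "tcoeff f 2 = g 0" using C(2) dwg by simp
    show "tcoeff f 3 = 2/3 * (deriv g 0 + (g 0)^2)" using C(3) Z dwg by simp
  qed
qed

lemma moeb_le:
  assumes a: "cmod a \<le> 1" and u: "cmod u < 1"
  shows "cmod (u + a) \<le> cmod (1 + cnj a * u)"
proof -
  have e: "cmod (1 + cnj a * u)^2 - cmod (u + a)^2 = (1 - cmod u ^ 2) * (1 - cmod a ^ 2)"
    unfolding cmod_power2 by (simp add: power2_eq_square algebra_simps)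
  have "cmod u ^ 2 \<le> 1" using u by (simp add: power_le_one)
  moreover have "cmod a ^ 2 \<le> 1" using a by (simp add: power_le_one)
  ultimately have "(1 - cmod u ^ 2) * (1 - cmod a ^ 2) \<ge> 0" by simp
  then have "cmod (u + a)^2 \<le> cmod (1 + cnj a * u)^2" using e by linarith
  then show ?thesis by (rule power2_le_imp_le) simp
qed

lemma exist:
  fixes a c :: complex
  assumes a: "cmod a \<le> 1" and c: "cmod c \<le> 1"
  shows "\<exists>f\<in>bounded_turning. tcoeff f 2 = a \<and> tcoeff f 3 = 2/3 * ((1 - (cmod a)^2) * c + a^2)"
proof -
  have z0: "0 \<in> ball (0::complex) 1" by simp
  have un: "cmod (c * z) < 1" if "z \<in> ball 0 1" for z
  proof -
    have "cmod c * cmod z \<le> 1 * cmod z" by (rule mult_right_mono) (use c in auto)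
    moreover have "cmod z < 1" using that by simp
    ultimately show ?thesis by (simp add: norm_mult)
  qed
  have dn: "1 + cnj a * c * z \<noteq> 0" if "z \<in> ball 0 1" for z
  proof
    assume h: "1 + cnj a * c * z = 0"
    have "cmod (cnj a * (c * z)) \<le> 1 * cmod (c * z)" unfolding norm_mult
      by (rule mult_right_mono) (use a in auto)
    also have "\<dots> < 1" using un[OF that] by simp
    finally have "cmod (cnj a * c * z) < 1" by (simp add: mult.assoc)
    moreover have "cnj a * c * z = -1" using h by (simp add: add_eq_0_iff)
    ultimately show False by simp
  qed
  define g where "g = (\<lambda>z. (c * z + a) / (1 + cnj a * c * z))"
  have hg: "g holomorphic_on ball 0 1" unfolding g_def
    by (intro holomorphic_intros) (use dn in auto)
  have gle: "cmod (g z) \<le> 1" if "z \<in> ball 0 1" for z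
  proof -
    have "cmod (c * z + a) \<le> cmod (1 + cnj a * (c * z))" by (rule moeb_le[OF a un[OF that]])
    then show ?thesis using dn[OF that] unfolding g_def by (simp add: norm_divide divide_le_eq mult.assoc)
  qed
  define w where "w = (\<lambda>z. z * g z)"
  have hw: "w holomorphic_on ball 0 1" unfolding w_def by (intro holomorphic_intros hg)
  have w0: "w 0 = 0" by (simp add: w_def)
  have wlt: "\<forall>z\<in>ball 0 1. cmod (w z) < 1"
  proof
    fix z :: complex assume z: "z \<in> ball 0 1"
    have "cmod z * cmod (g z) \<le> cmod z * 1" by (rule mult_left_mono) (use gle[OF z] in auto)
    then show "cmod (w z) < 1" using z by (simp add: w_def norm_mult)
  qed
  have wn: "1 - w z \<noteq> 0" if "z \<in> ball 0 1" for z
    using wlt that by (metis norm_one order.irrefl right_minus_eq)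
  have hq: "(\<lambda>z. (1 + w z) / (1 - w z)) holomorphic_on ball 0 1"
    by (intro holomorphic_intros hw) (use wn in auto)
  obtain F where F: "\<And>x. x \<in> ball 0 1 \<Longrightarrow> (F has_field_derivative (1 + w x) / (1 - w x)) (at x within ball 0 1)"
    using holomorphic_convex_primitive'[OF convex_ball open_ball hq] by blast
  define f where "f = (\<lambda>z. F z - F 0)"
  have df: "(f has_field_derivative (1 + w x) / (1 - w x)) (at x)" if "x \<in> ball 0 1" for x
    unfolding f_def using F[OF that] that
    by (auto intro!: derivative_eq_intros simp: at_within_open[OF that open_ball])
  have hf: "f holomorphic_on ball 0 1"
    using df by (meson field_differentiable_at_within field_differentiable_def holomorphic_on_def)
  have f0: "f 0 = 0" by (simp add: f_def)
  have fd: "\<forall>z\<in>ball 0 1. deriv f z = (1 + w z) / (1 - w z)"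
    using df DERIV_imp_deriv by blast
  note C = coef[OF hw w0 wlt hf f0 fd]
  have wg': "\<forall>z\<in>ball 0 1. w z = z * g z" by (simp add: w_def)
  note Z = zmul_derivs[OF hg wg']
  have "(g has_field_derivative c - cnj a * c * a) (at 0)"
    unfolding g_def
    apply (rule derivative_eq_intros refl)+
    apply simp
    apply (simp add: algebra_simps)
    done
  then have dg: "deriv g 0 = c - cnj a * c * a" by (rule DERIV_imp_deriv)
  have aa: "cnj a * a = of_real ((cmod a)^2)"
    by (simp only: complex_norm_square mult.commute)
  have dg': "deriv g 0 = (1 - (cmod a)^2) * c" 
    unfolding dg using aa by (simp add: algebra_simps)
  show ?thesis
  proof (intro bexI conjI)
    show "f \<in> bounded_turning" by (rule C(1))
    show "tcoeff f 2 = a" using C(2) Z by (simp add: g_def)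
    show "tcoeff f 3 = 2/3 * ((1 - (cmod a)^2) * c + a^2)"
      using C(3) Z dg' by (simp add: g_def)
  qed
qed

lemma alg5:
  fixes B mu :: real
  assumes "B > 0"
  shows "(B * (3*mu/(2*B))^2 - 2)/3 - mu*(3*mu/(2*B)) = -(8 + 9*mu^2/B)/12"
  using assms by (simp add: field_simps power2_eq_square)

lemma alg5b:
  fixes B mu r :: real
  assumes "B > 0"
  shows "(B*r^2 - 2)/3 - mu*r + (8 + 9*mu^2/B)/12 = (2*B*r - 3*mu)^2/(12*B)"
  using assms by (simp add: field_simps power2_eq_square)

lemma bnd:
  assumes f: "f \<in> bounded_turning"
  shows "\<exists>r. 0 \<le> r \<and> r \<le> 1 \<and>
     Ffun lam mu f \<le> ((cmod (2 - 3*lam) - 2) * r^2 + 2) / 3 - mu * r \<and>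
     Ffun lam mu f \<ge> ((cmod (2 - 3*lam) + 2) * r^2 - 2) / 3 - mu * r \<and>
     Ffun lam mu f \<ge> - mu * r"
proof -
  obtain w1 w2 where w1: "cmod w1 \<le> 1" and w2: "cmod w2 \<le> 1 - (cmod w1)^2"
    and t2: "tcoeff f 2 = w1" and t3: "tcoeff f 3 = 2/3 * (w2 + w1^2)"
    using necess[OF f] by blast
  define r where "r = cmod w1"
  define A where "A = cmod (2 - 3*lam)"
  define X where "X = (2/3) * w2"
  define Y where "Y = ((2 - 3*lam)/3) * w1^2"
  have E: "tcoeff f 3 - lam * (tcoeff f 2)^2 = X + Y"
    unfolding t2 t3 X_def Y_def by (simp add: field_simps)
  have nX: "cmod X = 2/3 * cmod w2" unfolding X_def by (simp add: norm_mult)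
  have nY: "cmod Y = A * r^2 / 3" unfolding Y_def A_def r_def by (simp add: norm_mult norm_divide norm_power)
  have F: "Ffun lam mu f = cmod (X + Y) - mu * r"
    unfolding Ffun_def E by (simp add: t2 r_def)
  have up: "cmod (X + Y) \<le> cmod X + cmod Y" by (rule norm_triangle_ineq)
  have lo: "cmod Y - cmod X \<le> cmod (X + Y)" using norm_diff_ineq[of Y X] by (simp add: add.commute)
  have r0: "0 \<le> r" by (simp add: r_def)
  show ?thesis
  proof (intro exI conjI)
    show "0 \<le> r" by (rule r0)
    show "r \<le> 1" using w1 r_def by simp
    show "Ffun lam mu f \<le> ((cmod (2 - 3*lam) - 2) * r^2 + 2) / 3 - mu * r"
      using F up nX nY w2 unfolding A_def[symmetric] r_def[symmetric] by (simp add: field_simps)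
    show "Ffun lam mu f \<ge> ((cmod (2 - 3*lam) + 2) * r^2 - 2) / 3 - mu * r"
      using F lo nX nY w2 unfolding A_def[symmetric] r_def[symmetric] by (simp add: field_simps)
    show "Ffun lam mu f \<ge> - mu * r"
      using F by simp
  qed
qed

lemma attain:
  fixes a c :: complex
  assumes "cmod a \<le> 1" "cmod c \<le> 1"
  shows "\<exists>f\<in>bounded_turning. Ffun lam mu f = cmod (2/3 * ((1 - (cmod a)^2) * c + a^2) - lam * a^2) - mu * cmod a"
proof -
  obtain f where f: "f \<in> bounded_turning" and t2: "tcoeff f 2 = a"
    and t3: "tcoeff f 3 = 2/3 * ((1 - (cmod a)^2) * c + a^2)"
    using exist[OF assms] by blast
  show ?thesis
    by (rule bexI[OF _ f]) (simp only: Ffun_def t2 t3)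
qed

theorem theorem4p1:
  fixes lam :: complex and mu :: real
  assumes "mu \<ge> 0"
  shows
   "(cmod (2 - 3*lam) \<ge> 2 + 3*mu \<longrightarrow>
       (\<forall>f\<in>bounded_turning. Ffun lam mu f \<le> (cmod (2 - 3*lam) - 3*mu) / 3) \<and>
       (\<exists>f\<in>bounded_turning. Ffun lam mu f = (cmod (2 - 3*lam) - 3*mu) / 3)) \<and>
    (cmod (2 - 3*lam) < 2 + 3*mu \<longrightarrow>
       (\<forall>f\<in>bounded_turning. Ffun lam mu f \<le> 2/3) \<and>
       (\<exists>f\<in>bounded_turning. Ffun lam mu f = 2/3)) \<and>
    (cmod (2 - 3*lam) \<le> (3*mu - 4) / 2 \<longrightarrow>
       (\<forall>f\<in>bounded_turning. Ffun lam mu f \<ge> - (3*mu - cmod (2 - 3*lam)) / 3) \<and>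
       (\<exists>f\<in>bounded_turning. Ffun lam mu f = - (3*mu - cmod (2 - 3*lam)) / 3)) \<and>
    (cmod (2 - 3*lam) \<ge> (9*mu^2 - 16) / 8 \<longrightarrow>
       (\<forall>f\<in>bounded_turning. Ffun lam mu f \<ge> - mu * sqrt (2 / (cmod (2 - 3*lam) + 2))) \<and>
       (\<exists>f\<in>bounded_turning. Ffun lam mu f = - mu * sqrt (2 / (cmod (2 - 3*lam) + 2)))) \<and>
    ((3*mu - 4) / 2 < cmod (2 - 3*lam) \<and> cmod (2 - 3*lam) < (9*mu^2 - 16) / 8 \<longrightarrow>
       (\<forall>f\<in>bounded_turning. Ffun lam mu f \<ge> - (8 + 9*mu^2 / (cmod (2 - 3*lam) + 2)) / 12) \<and>
       (\<exists>f\<in>bounded_turning. Ffun lam mu f = - (8 + 9*mu^2 / (cmod (2 - 3*lam) + 2)) / 12))"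
proof -
  define A where "A = cmod (2 - 3*lam)"
  have A0: "0 \<le> A" by (simp add: A_def)
  have B0: "A + 2 > 0" using A0 by simp
  have bd: "\<exists>r. 0 \<le> r \<and> r \<le> 1 \<and>
     Ffun lam mu f \<le> ((A - 2) * r^2 + 2) / 3 - mu * r \<and>
     Ffun lam mu f \<ge> ((A + 2) * r^2 - 2) / 3 - mu * r \<and>
     Ffun lam mu f \<ge> - mu * r" if "f \<in> bounded_turning" for f
    using bnd[OF that, of lam mu] unfolding A_def .
  have att1: "\<exists>f\<in>bounded_turning. Ffun lam mu f = (A - 3*mu) / 3"
  proof -
    have e: "2/3 - lam = (2 - 3*lam) / 3" by (simp add: field_simps)
    have "cmod ((2 - 3*lam) / 3) = A / 3" unfolding A_def norm_divide by simp
    then have "cmod (2/3 - lam) = A / 3" unfolding e .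
    then show ?thesis using attain[of 1 0 lam mu] by (simp add: field_simps)
  qed
  have att2: "\<exists>f\<in>bounded_turning. Ffun lam mu f = 2/3"
    using attain[of 0 1 lam mu] by simp
  define c where "c = - (2 - 3*lam) / of_real A"
  have c1: "cmod c \<le> 1"
    unfolding c_def by (cases "A = 0") (simp_all add: norm_divide A_def norm_minus_commute)
  have cA: "of_real A * c = - (2 - 3*lam)"
  proof (cases "A = 0")
    case True
    then have "2 - 3*lam = 0" by (simp add: A_def)
    then show ?thesis by (simp add: c_def)
  next
    case False then show ?thesis by (simp add: c_def)
  qed
  have gen: "2/3 * ((1 - (cmod (of_real t))^2) * c + (of_real t)^2) - lam * (of_real t)^2
      = ((2 - 3*lam) / (3 * A)) * of_real ((A + 2) * t^2 - 2)" if "A \<noteq> 0" for t :: real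
  proof -
    have "(of_real A :: complex) \<noteq> 0" using that by simp
    then show ?thesis unfolding c_def by (simp add: field_simps power2_eq_square)
  qed
  have att4: "\<exists>f\<in>bounded_turning. Ffun lam mu f = - mu * sqrt (2 / (A + 2))"
  proof -
    define r0 where "r0 = sqrt (2 / (A + 2))"
    have r0sq: "r0^2 = 2 / (A + 2)" unfolding r0_def using B0 by simp
    have r00: "0 \<le> r0" unfolding r0_def using B0 by simp
    have r01: "r0 \<le> 1" unfolding r0_def using B0 A0 by simp
    have E0: "2/3 * ((1 - (cmod (complex_of_real r0))^2) * c + (complex_of_real r0)^2) - lam * (complex_of_real r0)^2 = 0"
    proof (cases "A = 0")
      case True
      then have "2 - 3*lam = 0" by (simp add: A_def)
      then have l: "lam = 2/3" by (simp add: field_simps)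
      have "r0 = 1" unfolding r0_def using True by simp
      then show ?thesis using l by simp
    next
      case False
      have "(A + 2) * r0^2 - 2 = 0" using r0sq B0 by (simp add: field_simps)
      then show ?thesis unfolding gen[OF False] by simp
    qed
    have cm: "cmod (complex_of_real r0) \<le> 1" using r00 r01 by simp
    obtain f where f: "f \<in> bounded_turning" and fe: "Ffun lam mu f =
       cmod (2/3 * ((1 - (cmod (complex_of_real r0))^2) * c + (complex_of_real r0)^2) - lam * (complex_of_real r0)^2) - mu * cmod (complex_of_real r0)"
      using attain[OF cm c1, of lam mu] by blast
    have "Ffun lam mu f = - mu * r0" unfolding fe E0 using r00 by simp
    then show ?thesis using f unfolding r0_def by blast
  qed
  have att5: "\<exists>f\<in>bounded_turning. Ffun lam mu f = - (8 + 9*mu^2 / (A + 2)) / 12"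
    if h1: "(3*mu - 4) / 2 < A" and h2: "A < (9*mu^2 - 16) / 8"
  proof -
    have Apos: "A \<noteq> 0"
    proof
      assume "A = 0"
      then have "mu < 4/3" "16 < 9 * mu^2" using h1 h2 by auto
      moreover have "9 * mu^2 \<le> 9 * (4/3)^2"
        using \<open>mu < 4/3\<close> assms by (intro mult_left_mono power_mono) auto
      ultimately show False by (simp add: power2_eq_square)
    qed
    define rs where "rs = 3 * mu / (2 * (A + 2))"
    have rs0: "0 \<le> rs" unfolding rs_def using assms B0 by simp
    have rs1: "rs \<le> 1" unfolding rs_def using h1 B0 by (simp add: field_simps)
    have big: "(A + 2) * rs^2 - 2 > 0"
    proof -
      have "(A + 2) * rs^2 = 9 * mu^2 / (4 * (A + 2))"
      proof -
        define B where "B = A + 2"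
        have "B > 0" using B0 by (simp add: B_def)
        then have "B * (3 * mu / (2 * B))^2 = 9 * mu^2 / (4 * B)" by (simp add: field_simps power2_eq_square)
        then show ?thesis by (simp add: rs_def B_def)
      qed
      moreover have "9 * mu^2 / (4 * (A + 2)) > 2" using h2 B0 by (simp add: field_simps)
      ultimately show ?thesis by simp
    qed
    have E5: "cmod (2/3 * ((1 - (cmod (complex_of_real rs))^2) * c + (complex_of_real rs)^2) - lam * (complex_of_real rs)^2)
        = ((A + 2) * rs^2 - 2) / 3"
    proof -
      have n1: "cmod (complex_of_real ((A + 2) * rs^2 - 2)) = (A + 2) * rs^2 - 2"
        using big by (simp only: norm_of_real abs_of_pos)
      have n2: "cmod ((2 - 3*lam) / (3 * A)) = 1/3"
        using Apos A0 by (simp add: norm_divide norm_mult A_def[symmetric])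
      show ?thesis unfolding gen[OF Apos] norm_mult n1 n2 by simp
    qed
    have V: "((A + 2) * rs^2 - 2) / 3 - mu * rs = - (8 + 9*mu^2 / (A + 2)) / 12"
      unfolding rs_def by (rule alg5[OF B0])
    have cm: "cmod (complex_of_real rs) \<le> 1" using rs0 rs1 by simp
    obtain f where f: "f \<in> bounded_turning" and fe: "Ffun lam mu f =
       cmod (2/3 * ((1 - (cmod (complex_of_real rs))^2) * c + (complex_of_real rs)^2) - lam * (complex_of_real rs)^2) - mu * cmod (complex_of_real rs)"
      using attain[OF cm c1, of lam mu] by blast
    have "cmod (complex_of_real rs) = rs" using rs0 by simp
    then have "Ffun lam mu f = - (8 + 9*mu^2 / (A + 2)) / 12" unfolding fe E5 V[symmetric] by simp
    then show ?thesis using f by blast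
  qed
  show ?thesis
    unfolding A_def[symmetric]
  proof (intro conjI impI)
    assume h: "2 + 3 * mu \<le> A"
    show "\<forall>f\<in>bounded_turning. Ffun lam mu f \<le> (A - 3 * mu) / 3"
    proof
      fix f assume "f \<in> bounded_turning"
      then obtain r where r: "0 \<le> r" "r \<le> 1" "Ffun lam mu f \<le> ((A - 2) * r^2 + 2) / 3 - mu * r"
        using bd by blast
      have "(1 - r) * ((A - 2) * (1 + r) - 3 * mu) \<ge> 0"
      proof (rule mult_nonneg_nonneg)
        have "(A - 2) * (1 + r) \<ge> (A - 2) * 1" using h r assms by (intro mult_left_mono) auto
        then show "(A - 2) * (1 + r) - 3 * mu \<ge> 0" using h by simp
      qed (use r in simp)
      then show "Ffun lam mu f \<le> (A - 3 * mu) / 3" using r(3)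
        by (simp add: algebra_simps power2_eq_square)
    qed
    show "\<exists>f\<in>bounded_turning. Ffun lam mu f = (A - 3 * mu) / 3" by (rule att1)
  next
    assume h: "A < 2 + 3 * mu"
    show "\<forall>f\<in>bounded_turning. Ffun lam mu f \<le> 2 / 3"
    proof
      fix f assume "f \<in> bounded_turning"
      then obtain r where r: "0 \<le> r" "r \<le> 1" "Ffun lam mu f \<le> ((A - 2) * r^2 + 2) / 3 - mu * r"
        using bd by blast
      have "r * (3 * mu - (A - 2) * r) \<ge> 0"
      proof (rule mult_nonneg_nonneg)
        show "3 * mu - (A - 2) * r \<ge> 0"
        proof (cases "A \<le> 2")
          case True
          have "(A - 2) * r \<le> 0" using True r by (intro mult_nonpos_nonneg) auto
          then show ?thesis using assms by simp
        next
          case False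
          then have "(A - 2) * r \<le> (A - 2) * 1" using r by (intro mult_left_mono) auto
          then show ?thesis using h by simp
        qed
      qed (use r in simp)
      then show "Ffun lam mu f \<le> 2 / 3" using r(3)
        by (simp add: algebra_simps power2_eq_square)
    qed
    show "\<exists>f\<in>bounded_turning. Ffun lam mu f = 2 / 3" by (rule att2)
  next
    assume h: "A \<le> (3 * mu - 4) / 2"
    show "\<forall>f\<in>bounded_turning. Ffun lam mu f \<ge> - (3 * mu - A) / 3"
    proof
      fix f assume "f \<in> bounded_turning"
      then obtain r where r: "0 \<le> r" "r \<le> 1" "Ffun lam mu f \<ge> ((A + 2) * r^2 - 2) / 3 - mu * r"
        using bd by blast
      have "(1 - r) * (3 * mu - (A + 2) * (1 + r)) \<ge> 0"
      proof (rule mult_nonneg_nonneg)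
        have "(A + 2) * (1 + r) \<le> (A + 2) * 2" using r B0 by (intro mult_left_mono) auto
        then show "3 * mu - (A + 2) * (1 + r) \<ge> 0" using h by simp
      qed (use r in simp)
      then show "Ffun lam mu f \<ge> - (3 * mu - A) / 3" using r(3)
        by (simp add: algebra_simps power2_eq_square)
    qed
    show "\<exists>f\<in>bounded_turning. Ffun lam mu f = - (3 * mu - A) / 3" using att1 by simp
  next
    assume h: "(9 * mu^2 - 16) / 8 \<le> A"
    define r0 where "r0 = sqrt (2 / (A + 2))"
    have r0sq: "(A + 2) * r0^2 = 2"
    proof -
      have g: "\<forall>B>0. B * (sqrt (2/B))^2 = (2::real)" by simp
      then show ?thesis unfolding r0_def using B0 by blast
    qed
    have r00: "0 \<le> r0" unfolding r0_def using B0 by simp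
    have key: "3 * mu \<le> 2 * (A + 2) * r0"
    proof -
      have "(3 * mu)^2 \<le> (2 * (A + 2) * r0)^2"
      proof -
        have "(2 * (A + 2) * r0)^2 = 4 * (A + 2) * ((A + 2) * r0^2)" by (simp add: power2_eq_square algebra_simps)
        also have "\<dots> = 8 * (A + 2)" using r0sq by simp
        finally show ?thesis using h by (simp add: power2_eq_square)
      qed
      moreover have "0 \<le> 2 * (A + 2) * r0" using r00 B0 by simp
      ultimately show ?thesis by (rule power2_le_imp_le)
    qed
    show "\<forall>f\<in>bounded_turning. Ffun lam mu f \<ge> - mu * sqrt (2 / (A + 2))"
    proof
      fix f assume "f \<in> bounded_turning"
      then obtain r where r: "0 \<le> r" "r \<le> 1" "Ffun lam mu f \<ge> ((A + 2) * r^2 - 2) / 3 - mu * r"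
         "Ffun lam mu f \<ge> - mu * r"
        using bd by blast
      show "Ffun lam mu f \<ge> - mu * sqrt (2 / (A + 2))"
      proof (cases "r \<le> r0")
        case True
        then have "mu * r \<le> mu * r0" using assms by (intro mult_left_mono) auto
        then show ?thesis using r(4) by (simp add: r0_def)
      next
        case False
        have "(r - r0) * ((A + 2) * (r + r0) - 3 * mu) \<ge> 0"
        proof (rule mult_nonneg_nonneg)
          have "(A + 2) * (r + r0) \<ge> (A + 2) * (2 * r0)" using False B0 by (intro mult_left_mono) auto
          moreover have "(A + 2) * (2 * r0) = 2 * (A + 2) * r0" by simp
          ultimately show "(A + 2) * (r + r0) - 3 * mu \<ge> 0" using key by linarith
        qed (use False in simp)
        then have "((A + 2) * r^2 - 2) / 3 - mu * r \<ge> - mu * r0" using r0sq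
          by (simp add: algebra_simps power2_eq_square)
        then show ?thesis using r(3) by (simp add: r0_def)
      qed
    qed
    show "\<exists>f\<in>bounded_turning. Ffun lam mu f = - mu * sqrt (2 / (A + 2))" by (rule att4)
  next
    assume h: "(3 * mu - 4) / 2 < A \<and> A < (9 * mu^2 - 16) / 8"
    show "\<forall>f\<in>bounded_turning. Ffun lam mu f \<ge> - (8 + 9 * mu^2 / (A + 2)) / 12"
    proof
      fix f assume "f \<in> bounded_turning"
      then obtain r where r: "0 \<le> r" "r \<le> 1" "Ffun lam mu f \<ge> ((A + 2) * r^2 - 2) / 3 - mu * r"
        using bd by blast
      have sq: "(A + 2) * (2 * (A + 2) * r - 3 * mu)^2 \<ge> 0" using B0 by simp
      have "((A + 2) * r^2 - 2) / 3 - mu * r + (8 + 9 * mu^2 / (A + 2)) / 12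
          = (2 * (A + 2) * r - 3 * mu)^2 / (12 * (A + 2))"
        by (rule alg5b[OF B0])
      moreover have "(2 * (A + 2) * r - 3 * mu)^2 / (12 * (A + 2)) \<ge> 0" using B0 by simp
      ultimately show "Ffun lam mu f \<ge> - (8 + 9 * mu^2 / (A + 2)) / 12" using r(3) by linarith
    qed
    show "\<exists>f\<in>bounded_turning. Ffun lam mu f = - (8 + 9 * mu^2 / (A + 2)) / 12"
      using att5 h by blast
  qed
qed

end
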